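(* Let $\mathbb{K}$ be a field with $|\mathbb{K}|>2$ and let $(X,Z,\Xi,\Theta)$ be a dual split pre-Veronese set. The following are equivalent: (i) $\Theta=\emptyset$; (ii) for every $\xi\in\Xi$, the vertex $Y\cap\xi$ of $(X\cup Y)\cap\xi$ equals $Y$; (iii) there exists $\xi\in\Xi$ whose vertex $Y\cap\xi$ equals $Y$.
   Context: Let $\mathbb{K}$ be a field. For integers $R\ge1$, $V\ge -1$, an $(R,V)$-cone is a cone with a $V$-dimensional vertex (empty if $V=-1$) over a non-degenerate hyperbolic quadric in $\mathbb{P}^{2R+1}(\mathbb{K})$; the $(R,V)$-tube is the cone minus its vertex. Let $r,v,r',v'\ge -1$ be integers with $r'>r\ge1$, $d=2r+v+1$, $d'=2r'+v'+1$. Let $X,Z$ be point sets with $X\cup Z$ spanning $\mathbb{P}^N(\mathbb{K})$, $Y:=\langle Z\rangle$; $\Xi$ a family of $(d+1)$-dimensional subspaces with $|\Xi|>1$, $\Theta$ a possibly empty family of $(d'+1)$-dimensional subspaces such that: for $\xi\in\Xi$, $(X\cup Y)\cap\xi$ is an $(r,v)$-cone with vertex $Y\cap\xi$ and $X\cap\xi$ is its tube; for $\theta\in\Theta$, $(X\cup Y)\cap\theta$ is an $(r',v')$-cone $C_\theta$, $Y\cap\theta$ is a generator $M$ of $C_\theta$, $Z\cap\theta$ is the disjoint union of the vertex $V_\theta$ and an $r'$-space of $M$ complementary to $V_\theta$, and $X\cap\theta=C_\theta\setminus M$. A subspace is singular if all its points lie in $X\cup Y$; two points are collinear if the joining line is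 singular. Axioms: (S1) any two distinct points of $X\cup Z$ lie in a common member of $\Xi\cup\Theta$; (S2) the intersection of two distinct members of $\Xi\cup\Theta$ is singular. A dual split pre-Veronese set (pre-DSV) is such a quadruple satisfying (S1) and (S2). *)

theory Defs
  imports Complex_Main "HOL-Library.Function_Algebras"
begin

text \<open>Model of P^N(K): vectors are functions nat => K vanishing above N
  (so K^(N+1)); a projective point is a 1-dimensional linear subspace;
  a projective subspace of projective dimension k is represented by the
  underlying linear subspace (of linear dimension k+1).\<close>

definition sc :: "'k::field \<Rightarrow> (nat \<Rightarrow> 'k) \<Rightarrow> (nat \<Rightarrow> 'k)" where
  "sc c x = (\<lambda>i. c * x i)"

definition amb :: "nat \<Rightarrow> (nat \<Rightarrow> 'k::field) set" where
  "amb N = {x. \<forall>i>N. x i = 0}"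

definition pts :: "nat \<Rightarrow> (nat \<Rightarrow> 'k::field) set set" where
  "pts N = {{sc c x | c. True} | x. x \<in> amb N \<and> x \<noteq> 0}"

abbreviation lsubspace :: "(nat \<Rightarrow> 'k::field) set \<Rightarrow> bool" where
  "lsubspace S \<equiv> module.subspace (sc :: 'k \<Rightarrow> _) S"

abbreviation lspan :: "(nat \<Rightarrow> 'k::field) set \<Rightarrow> (nat \<Rightarrow> 'k) set" where
  "lspan S \<equiv> module.span (sc :: 'k \<Rightarrow> _) S"

abbreviation lindep :: "(nat \<Rightarrow> 'k::field) set \<Rightarrow> bool" where
  "lindep S \<equiv> module.independent (sc :: 'k \<Rightarrow> _) S"

abbreviation ldim :: "(nat \<Rightarrow> 'k::field) set \<Rightarrow> nat" where
  "ldim S \<equiv> vector_space.dim (sc :: 'k \<Rightarrow> _) S"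

definition ptsof :: "nat \<Rightarrow> (nat \<Rightarrow> 'k::field) set \<Rightarrow> (nat \<Rightarrow> 'k) set set" where
  "ptsof N S = {p \<in> pts N. p \<subseteq> S}"

definition hypform :: "nat \<Rightarrow> (nat \<Rightarrow> 'k::field) \<Rightarrow> 'k" where
  "hypform R a = (\<Sum>k\<le>R. a (2*k) * a (2*k+1))"

text \<open>cone C N R V S W: the point set C is an (R,V)-cone in P^N, spanning the
  projective subspace with underlying linear subspace S, with vertex the
  projective subspace with underlying linear subspace W (of projective
  dimension V; W = {0}, i.e. empty vertex, when V = -1).\<close>
definition cone ::
  "nat \<Rightarrow> nat \<Rightarrow> int \<Rightarrow> (nat \<Rightarrow> 'k::field) set \<Rightarrow> (nat \<Rightarrow> 'k) set set \<Rightarrow> (nat \<Rightarrow> 'k) set \<Rightarrow> bool"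
  where
  "cone N R V S C W \<longleftrightarrow> V \<ge> -1 \<and> R \<ge> 1 \<and>
     (\<exists>f :: nat \<Rightarrow> (nat \<Rightarrow> 'k).
        let n = 2*R + 2 + nat (V+1) in
        inj_on f {..<n} \<and> f ` {..<n} \<subseteq> amb N \<and> lindep (f ` {..<n}) \<and>
        S = lspan (f ` {..<n}) \<and>
        W = lspan (f ` {2*R+2..<n}) \<and>
        C = {p \<in> pts N. \<exists>a. (\<Sum>i<n. sc (a i) (f i)) \<in> p - {0} \<and> hypform R a = 0})"

definition generator :: "nat \<Rightarrow> (nat \<Rightarrow> 'k::field) set set \<Rightarrow> (nat \<Rightarrow> 'k) set \<Rightarrow> bool" where
  "generator N C M \<longleftrightarrow> lsubspace M \<and> M \<subseteq> amb N \<and> ptsof N M \<subseteq> C \<and>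
     (\<forall>M'. lsubspace M' \<and> M \<subseteq> M' \<and> M' \<subseteq> amb N \<and> ptsof N M' \<subseteq> C \<longrightarrow> M' = M)"

text \<open>Members of Xi, Theta are given by their underlying linear
  subspaces; Y = <Z> is the linear span of the points of Z.\<close>
definition preDSV ::
  "nat \<Rightarrow> int \<Rightarrow> int \<Rightarrow> int \<Rightarrow> int \<Rightarrow> (nat \<Rightarrow> 'k::field) set set \<Rightarrow> (nat \<Rightarrow> 'k) set set
   \<Rightarrow> (nat \<Rightarrow> 'k) set set \<Rightarrow> (nat \<Rightarrow> 'k) set set \<Rightarrow> bool" where
  "preDSV N r v r' v' X Z \<Xi> \<Theta> \<longleftrightarrow>
    (let Y = lspan (\<Union>Z); XY = X \<union> ptsof N Y in
     r \<ge> 1 \<and> r' > r \<and> v \<ge> -1 \<and> v' \<ge> -1 \<and>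
     X \<subseteq> pts N \<and> Z \<subseteq> pts N \<and> lspan (\<Union>(X \<union> Z)) = amb N \<and>
     (\<exists>\<xi>1 \<in> \<Xi>. \<exists>\<xi>2 \<in> \<Xi>. \<xi>1 \<noteq> \<xi>2) \<and>
     (\<forall>\<xi>\<in>\<Xi>. cone N (nat r) v \<xi> (XY \<inter> ptsof N \<xi>) (Y \<inter> \<xi>) \<and>
              X \<inter> ptsof N \<xi> = (XY \<inter> ptsof N \<xi>) - ptsof N (Y \<inter> \<xi>)) \<and>
     (\<forall>\<theta>\<in>\<Theta>. \<exists>V U. cone N (nat r') v' \<theta> (XY \<inter> ptsof N \<theta>) V \<and>
              generator N (XY \<inter> ptsof N \<theta>) (Y \<inter> \<theta>) \<and>
              lsubspace U \<and> U \<subseteq> Y \<inter> \<theta> \<and> ldim U = nat (r' + 1) \<and>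
              U \<inter> V = {0} \<and> lspan (U \<union> V) = Y \<inter> \<theta> \<and>
              Z \<inter> ptsof N \<theta> = ptsof N V \<union> ptsof N U \<and>
              X \<inter> ptsof N \<theta> = (XY \<inter> ptsof N \<theta>) - ptsof N (Y \<inter> \<theta>)) \<and>
     \<comment> \<open>(S1)\<close>
     (\<forall>p\<in>X \<union> Z. \<forall>q\<in>X \<union> Z. p \<noteq> q \<longrightarrow> (\<exists>\<sigma>\<in>\<Xi> \<union> \<Theta>. p \<subseteq> \<sigma> \<and> q \<subseteq> \<sigma>)) \<and>
     \<comment> \<open>(S2)\<close>
     (\<forall>\<sigma>1\<in>\<Xi> \<union> \<Theta>. \<forall>\<sigma>2\<in>\<Xi> \<union> \<Theta>. \<sigma>1 \<noteq> \<sigma>2 \<longrightarrow> ptsof N (\<sigma>1 \<inter> \<sigma>2) \<subseteq> XY))"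

end

theory Submission
  imports Defs
begin

lemma vs_sc: "vector_space (sc :: 'k::field \<Rightarrow> (nat\<Rightarrow>'k) \<Rightarrow> _)"
  by unfold_locales (auto simp: sc_def fun_eq_iff algebra_simps)

interpretation V: vector_space "sc :: 'k::field \<Rightarrow> (nat\<Rightarrow>'k) \<Rightarrow> _"
  by (rule vs_sc)

definition pt :: "(nat \<Rightarrow> 'k::field) \<Rightarrow> (nat \<Rightarrow> 'k) set" where
  "pt x = {sc c x | c. True}"

lemma pts_eq: "pts N = {pt x | x. x \<in> amb N \<and> x \<noteq> 0}"
  by (simp add: pts_def pt_def)

lemma amb_sub: "lsubspace (amb N :: (nat \<Rightarrow> 'k::field) set)"
  by (auto simp: V.subspace_def amb_def sc_def)

lemma pt_mem: "x \<in> pt x"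
  unfolding pt_def by (rule CollectI, rule exI[of _ 1]) simp

lemma pt_sub: "lsubspace S \<Longrightarrow> pt x \<subseteq> S \<longleftrightarrow> x \<in> S"
  using pt_mem[of x] by (auto simp: pt_def intro: V.subspace_scale)

lemma pt_in_pts: "x \<in> amb N \<Longrightarrow> x \<noteq> 0 \<Longrightarrow> pt x \<in> pts N"
  by (auto simp: pts_eq)

lemma pts_amb: "p \<in> pts N \<Longrightarrow> p \<subseteq> amb N"
  using pt_sub[OF amb_sub] by (auto simp: pts_eq)

lemma ptsof_iff: "p \<in> ptsof N S \<longleftrightarrow> p \<in> pts N \<and> p \<subseteq> S"
  by (simp add: ptsof_def)

lemma coord_unique:
  fixes f :: "nat \<Rightarrow> (nat \<Rightarrow> 'k::field)"
  assumes inj: "inj_on f {..<n}" and ind: "lindep (f ` {..<n})"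
    and eq: "(\<Sum>i<n. sc (a i) (f i)) = (\<Sum>i<n. sc (b i) (f i))" and j: "j < n"
  shows "a j = b j"
proof -
  have 0: "(\<Sum>i<n. sc (a i - b i) (f i)) = 0"
    using eq by (simp add: V.scale_left_diff_distrib sum_subtractf)
  define u where "u = (\<lambda>v. a (the_inv_into {..<n} f v) - b (the_inv_into {..<n} f v))"
  have "(\<Sum>v\<in>f`{..<n}. sc (u v) v) = (\<Sum>i<n. sc (u (f i)) (f i))"
    by (simp add: sum.reindex inj)
  also have "\<dots> = (\<Sum>i<n. sc (a i - b i) (f i))"
    by (intro sum.cong) (auto simp: u_def the_inv_into_f_f inj)
  finally have "(\<Sum>v\<in>f`{..<n}. sc (u v) v) = 0" using 0 by simp
  then have "u (f j) = 0"
    using V.independentD[OF ind, of "f`{..<n}" u "f j"] j by auto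
  then show ?thesis using j by (simp add: u_def the_inv_into_f_f inj)
qed

lemma cone_frame:
  assumes "cone N R V S C W"
  obtains f n where "n = 2*R + 2 + nat (V+1)" "V \<ge> -1" "R \<ge> 1"
    "inj_on f {..<n}" "f ` {..<n} \<subseteq> amb N" "lindep (f ` {..<n})"
    "S = lspan (f ` {..<n})" "W = lspan (f ` {2*R+2..<n})"
    "C = {p \<in> pts N. \<exists>a. (\<Sum>i<n. sc (a i) (f i)) \<in> p - {0} \<and> hypform R a = 0}"
  using assms unfolding cone_def Let_def by blast

lemma cone_basic:
  assumes "cone N R V S C W"
  shows "lsubspace S" "S \<subseteq> amb N" "lsubspace W" "W \<subseteq> S"
proof -
  obtain f n where F0: "n = 2*R + 2 + nat (V+1)" "V \<ge> -1" "R \<ge> 1"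
    "inj_on f {..<n}" "f ` {..<n} \<subseteq> amb N" "lindep (f ` {..<n})"
    "S = lspan (f ` {..<n})" "W = lspan (f ` {2*R+2..<n})"
    "C = {p \<in> pts N. \<exists>a. (\<Sum>i<n. sc (a i) (f i)) \<in> p - {0} \<and> hypform R a = 0}"
    by (rule cone_frame[OF assms])
  note F = F0(1) F0(4-8)
  show "lsubspace S" "lsubspace W" using F by auto
  show "S \<subseteq> amb N" using F V.span_minimal[OF F(3) amb_sub] by simp
  show "W \<subseteq> S" using F by (auto intro!: V.span_mono)
qed

lemma cone_dim:
  assumes "cone N R V S C W"
  shows "\<exists>B. finite B \<and> lindep B \<and> card B = nat (V+1) \<and> W = lspan B"
proof -
  obtain f n where F0: "n = 2*R + 2 + nat (V+1)" "V \<ge> -1" "R \<ge> 1"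
    "inj_on f {..<n}" "f ` {..<n} \<subseteq> amb N" "lindep (f ` {..<n})"
    "S = lspan (f ` {..<n})" "W = lspan (f ` {2*R+2..<n})"
    "C = {p \<in> pts N. \<exists>a. (\<Sum>i<n. sc (a i) (f i)) \<in> p - {0} \<and> hypform R a = 0}"
    by (rule cone_frame[OF assms])
  note F = F0(1) F0(4-8)
  have sub: "{2*R+2..<n} \<subseteq> {..<n}" by auto
  have "card (f ` {2*R+2..<n}) = nat (V+1)"
    using card_image[OF inj_on_subset[OF F(2) sub]] F(1) by simp
  moreover have "lindep (f ` {2*R+2..<n})"
    using V.independent_mono[OF F(4)] sub by blast
  ultimately show ?thesis using F(6) by blast
qed

lemma hyp_ind: "hypform R (\<lambda>i::nat. if i = j then c else 0) = 0"
  unfolding hypform_def by (intro sum.neutral) auto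

lemma sum_ind: "j < (n::nat) \<Longrightarrow> (\<Sum>i<n. sc (if i = j then c else 0) (f i)) = sc c (f j)"
proof -
  assume "j < n"
  have "(\<Sum>i<n. sc (if i = j then c else 0) (f i)) = (\<Sum>i<n. if i = j then sc c (f j) else 0)"
    by (intro sum.cong) (auto simp: sc_def fun_eq_iff)
  also have "\<dots> = sc c (f j)" using \<open>j < n\<close> by (subst sum.delta) auto
  finally show ?thesis .
qed

lemma cone_pts:
  assumes "cone N R V S C W"
  shows "\<exists>f0 f1. f0 \<in> S \<and> f1 \<in> S \<and> f0 \<in> amb N \<and> f1 \<in> amb N \<and> f0 \<noteq> f1 \<and>
     f0 \<notin> W \<and> f1 \<notin> W \<and> pt f0 \<in> C \<and> pt f1 \<in> C \<and> pt (f0 - f1) \<notin> C"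
proof -
  obtain f n where F: "n = 2*R + 2 + nat (V+1)" "V \<ge> -1" "R \<ge> 1"
    "inj_on f {..<n}" "f ` {..<n} \<subseteq> amb N" "lindep (f ` {..<n})"
    "S = lspan (f ` {..<n})" "W = lspan (f ` {2*R+2..<n})"
    "C = {p \<in> pts N. \<exists>a. (\<Sum>i<n. sc (a i) (f i)) \<in> p - {0} \<and> hypform R a = 0}"
    by (rule cone_frame[OF assms])
  have n: "2*R+2 \<le> n" using F(1) by simp
  have notW: "f j \<notin> W" if "j < 2*R+2" for j
  proof
    assume "f j \<in> W"
    have jn: "j < n" using that n by simp
    have "f ` {2*R+2..<n} \<subseteq> f ` {..<n} - {f j}"
      using F(4) that n by (auto simp: inj_on_eq_iff)
    then have "f j \<in> lspan (f ` {..<n} - {f j})"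
      using \<open>f j \<in> W\<close> F(8) V.span_mono by blast
    moreover have "f j \<in> f ` {..<n}" using jn by simp
    ultimately have "V.dependent (f ` {..<n})" unfolding V.dependent_def by blast
    then show False using F(6) by simp
  qed
  have W0: "0 \<in> W" using F(8) V.span_zero by simp
  have inS: "f j \<in> S" if "j < n" for j using F(7) that by (auto intro!: V.span_base)
  have inA: "f j \<in> amb N" if "j < n" for j using F(5) that by auto
  have ptC: "pt (f j) \<in> C" if "j < 2*R+2" for j
  proof -
    have jn: "j < n" using that n by simp
    have nz: "f j \<noteq> 0" using notW[OF that] W0 by auto
    have "(\<Sum>i<n. sc (if i = j then 1 else 0) (f i)) = f j"
      using sum_ind[of j n 1 f] jn by (simp add: sc_def)
    then have "(\<Sum>i<n. sc ((\<lambda>i. if i = j then 1 else 0) i) (f i)) \<in> pt (f j) - {0}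
       \<and> hypform R (\<lambda>i. if i = j then 1 else 0) = 0"
      using pt_mem[of "f j"] nz hyp_ind[of R j 1] by simp
    then have "\<exists>a. (\<Sum>i<n. sc (a i) (f i)) \<in> pt (f j) - {0} \<and> hypform R a = 0"
      by (intro exI[of _ "\<lambda>i. if i = j then 1 else 0"])
    then show ?thesis unfolding F(9) by (intro CollectI conjI pt_in_pts[OF inA[OF jn] nz])
  qed
  have ne: "f 0 \<noteq> f 1" using inj_on_contraD[OF F(4), of 0 1] n by simp
  have notC: "pt (f 0 - f 1) \<notin> C"
  proof
    assume "pt (f 0 - f 1) \<in> C"
    then obtain a where a: "(\<Sum>i<n. sc (a i) (f i)) \<in> pt (f 0 - f 1) - {0}" "hypform R a = 0"
      using F(9) by auto
    then obtain c where c: "(\<Sum>i<n. sc (a i) (f i)) = sc c (f 0 - f 1)" "c \<noteq> 0"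
      by (auto simp: pt_def)
    define b where "b = (\<lambda>i::nat. (if i = 0 then c else 0) + (if i = 1 then -c else 0))"
    have "(\<Sum>i<n. sc (b i) (f i)) = (\<Sum>i<n. sc (if i = 0 then c else 0) (f i) + sc (if i = 1 then -c else 0) (f i))"
      by (intro sum.cong) (auto simp: b_def V.scale_left_distrib)
    also have "\<dots> = sc c (f 0) + sc (-c) (f 1)"
      using sum_ind[of 0 n c f] sum_ind[of 1 n "-c" f] n by (simp add: sum.distrib)
    also have "\<dots> = sc c (f 0 - f 1)" by (simp add: V.scale_right_diff_distrib)
    finally have eq: "(\<Sum>i<n. sc (a i) (f i)) = (\<Sum>i<n. sc (b i) (f i))" using c by simp
    have ab: "a j = b j" if "j < n" for j using coord_unique[OF F(4) F(6) eq that] .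
    have "hypform R a = a 0 * a 1 + (\<Sum>k<R. a (2*Suc k) * a (2*Suc k + 1))"
      unfolding hypform_def by (simp add: sum.atMost_shift)
    also have "(\<Sum>k<R. a (2*Suc k) * a (2*Suc k + 1)) = 0"
    proof (intro sum.neutral ballI)
      fix k assume "k \<in> {..<R}"
      then have "2*Suc k < n" using n by simp
      then show "a (2*Suc k) * a (2*Suc k + 1) = 0" using ab by (simp add: b_def)
    qed
    also have "a 0 = c" using ab[of 0] n by (simp add: b_def)
    also have "a 1 = -c" using ab[of 1] n by (simp add: b_def)
    finally have "hypform R a = - (c*c)" by simp
    then show False using a(2) c(2) by simp
  qed
  have "f 0 \<in> S \<and> f 1 \<in> S \<and> f 0 \<in> amb N \<and> f 1 \<in> amb N \<and> f 0 \<noteq> f 1 \<and>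
     f 0 \<notin> W \<and> f 1 \<notin> W \<and> pt (f 0) \<in> C \<and> pt (f 1) \<in> C \<and> pt (f 0 - f 1) \<notin> C"
    using n ne notC inS[of 0] inS[of 1] inA[of 0] inA[of 1] notW[of 0] notW[of 1] ptC[of 0] ptC[of 1]
    by simp
  then show ?thesis by (intro exI[of _ "f 0"] exI[of _ "f 1"])
qed

lemma cone_ext:
  assumes "cone N R V S C W" "pt v \<in> C" "w \<in> W" "v + w \<noteq> 0" "v \<in> amb N"
  shows "pt (v + w) \<in> C"
proof -
  obtain f n where F: "n = 2*R + 2 + nat (V+1)" "V \<ge> -1" "R \<ge> 1"
    "inj_on f {..<n}" "f ` {..<n} \<subseteq> amb N" "lindep (f ` {..<n})"
    "S = lspan (f ` {..<n})" "W = lspan (f ` {2*R+2..<n})"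
    "C = {p \<in> pts N. \<exists>a. (\<Sum>i<n. sc (a i) (f i)) \<in> p - {0} \<and> hypform R a = 0}"
    by (rule cone_frame[OF assms(1)])
  have n: "2*R+2 \<le> n" using F(1) by simp
  obtain a where a: "(\<Sum>i<n. sc (a i) (f i)) \<in> pt v - {0}" "hypform R a = 0"
    using F(9) assms(2) by auto
  then obtain c where c: "(\<Sum>i<n. sc (a i) (f i)) = sc c v" "c \<noteq> 0"
    by (auto simp: pt_def)
  have sub: "{2*R+2..<n} \<subseteq> {..<n}" by auto
  obtain g where g: "w = (\<Sum>u\<in>f ` {2*R+2..<n}. sc (g u) u)"
    using assms(3) F(8) V.span_finite[of "f ` {2*R+2..<n}"] by auto
  have w: "w = (\<Sum>i\<in>{2*R+2..<n}. sc (g (f i)) (f i))"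
    using g inj_on_subset[OF F(4) sub] by (simp add: sum.reindex)
  define a' where "a' = (\<lambda>i. a i + (if 2*R+2 \<le> i then c * g (f i) else 0))"
  have "(\<Sum>i<n. sc (a' i) (f i)) = (\<Sum>i<n. sc (a i) (f i)) + (\<Sum>i<n. sc (if 2*R+2 \<le> i then c * g (f i) else 0) (f i))"
    by (simp add: a'_def V.scale_left_distrib sum.distrib)
  also have "(\<Sum>i<n. sc (if 2*R+2 \<le> i then c * g (f i) else 0) (f i)) = (\<Sum>i\<in>{2*R+2..<n}. sc (c * g (f i)) (f i))"
    by (rule sum.mono_neutral_cong_right) auto
  also have "\<dots> = sc c w" by (simp add: w V.scale_sum_right)
  finally have s: "(\<Sum>i<n. sc (a' i) (f i)) = sc c (v + w)"
    using c(1) by (simp only: V.scale_right_distrib)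
  have h: "hypform R a' = 0" using a(2) unfolding hypform_def a'_def
    by (simp add: algebra_simps)
  have wA: "w \<in> amb N" using assms(3) cone_basic[OF assms(1)] by auto
  have vwA: "v + w \<in> amb N" using amb_sub[of N] wA assms(5) V.subspace_add by blast
  have "sc c (v + w) \<in> pt (v + w) - {0}" using c(2) assms(4) by (auto simp: pt_def)
  then have E: "\<exists>a. (\<Sum>i<n. sc (a i) (f i)) \<in> pt (v + w) - {0} \<and> hypform R a = 0"
    using s h by (intro exI[of _ a']) simp
  show ?thesis unfolding F(9) by (rule CollectI, rule conjI, rule pt_in_pts[OF vwA assms(4)], rule E)
qed


theorem lemma4p16:
  fixes X Z \<Xi> \<Theta> :: "(nat \<Rightarrow> 'k::field) set set"
    and N :: nat and r v r' v' :: int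
  assumes "infinite (UNIV :: 'k set) \<or> card (UNIV :: 'k set) > 2"
    and "preDSV N r v r' v' X Z \<Xi> \<Theta>"
  defines "Y \<equiv> lspan (\<Union>Z)"
  shows "(\<Theta> = {} \<longleftrightarrow> (\<forall>\<xi>\<in>\<Xi>. Y \<inter> \<xi> = Y)) \<and>
         ((\<forall>\<xi>\<in>\<Xi>. Y \<inter> \<xi> = Y) \<longleftrightarrow> (\<exists>\<xi>\<in>\<Xi>. Y \<inter> \<xi> = Y))"
proof -
  define XY where "XY = X \<union> ptsof N Y"
  have P0: "r \<ge> 1 \<and> r' > r \<and> v \<ge> -1 \<and> v' \<ge> -1 \<and>
     X \<subseteq> pts N \<and> Z \<subseteq> pts N \<and> lspan (\<Union>(X \<union> Z)) = amb N \<and>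
     (\<exists>\<xi>1 \<in> \<Xi>. \<exists>\<xi>2 \<in> \<Xi>. \<xi>1 \<noteq> \<xi>2) \<and>
     (\<forall>\<xi>\<in>\<Xi>. cone N (nat r) v \<xi> (XY \<inter> ptsof N \<xi>) (Y \<inter> \<xi>) \<and>
              X \<inter> ptsof N \<xi> = (XY \<inter> ptsof N \<xi>) - ptsof N (Y \<inter> \<xi>)) \<and>
     (\<forall>\<theta>\<in>\<Theta>. \<exists>V U. cone N (nat r') v' \<theta> (XY \<inter> ptsof N \<theta>) V \<and>
              generator N (XY \<inter> ptsof N \<theta>) (Y \<inter> \<theta>) \<and>
              lsubspace U \<and> U \<subseteq> Y \<inter> \<theta> \<and> ldim U = nat (r' + 1) \<and>
              U \<inter> V = {0} \<and> lspan (U \<union> V) = Y \<inter> \<theta> \<and>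
              Z \<inter> ptsof N \<theta> = ptsof N V \<union> ptsof N U \<and>
              X \<inter> ptsof N \<theta> = (XY \<inter> ptsof N \<theta>) - ptsof N (Y \<inter> \<theta>)) \<and>
     (\<forall>p\<in>X \<union> Z. \<forall>q\<in>X \<union> Z. p \<noteq> q \<longrightarrow> (\<exists>\<sigma>\<in>\<Xi> \<union> \<Theta>. p \<subseteq> \<sigma> \<and> q \<subseteq> \<sigma>)) \<and>
     (\<forall>\<sigma>1\<in>\<Xi> \<union> \<Theta>. \<forall>\<sigma>2\<in>\<Xi> \<union> \<Theta>. \<sigma>1 \<noteq> \<sigma>2 \<longrightarrow> ptsof N (\<sigma>1 \<inter> \<sigma>2) \<subseteq> XY)"
    using assms(2) unfolding preDSV_def Let_def XY_def Y_def .
  then obtain HX1: "X \<subseteq> pts N" and HZ1: "Z \<subseteq> pts N"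
    and two: "\<exists>\<xi>1 \<in> \<Xi>. \<exists>\<xi>2 \<in> \<Xi>. \<xi>1 \<noteq> \<xi>2"
    and HX: "\<forall>\<xi>\<in>\<Xi>. cone N (nat r) v \<xi> (XY \<inter> ptsof N \<xi>) (Y \<inter> \<xi>) \<and>
              X \<inter> ptsof N \<xi> = (XY \<inter> ptsof N \<xi>) - ptsof N (Y \<inter> \<xi>)"
    and HT0: "\<forall>\<theta>\<in>\<Theta>. \<exists>V U. cone N (nat r') v' \<theta> (XY \<inter> ptsof N \<theta>) V \<and>
              generator N (XY \<inter> ptsof N \<theta>) (Y \<inter> \<theta>) \<and>
              lsubspace U \<and> U \<subseteq> Y \<inter> \<theta> \<and> ldim U = nat (r' + 1) \<and>
              U \<inter> V = {0} \<and> lspan (U \<union> V) = Y \<inter> \<theta> \<and>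
              Z \<inter> ptsof N \<theta> = ptsof N V \<union> ptsof N U \<and>
              X \<inter> ptsof N \<theta> = (XY \<inter> ptsof N \<theta>) - ptsof N (Y \<inter> \<theta>)"
    and S1: "\<forall>p\<in>X \<union> Z. \<forall>q\<in>X \<union> Z. p \<noteq> q \<longrightarrow> (\<exists>\<sigma>\<in>\<Xi> \<union> \<Theta>. p \<subseteq> \<sigma> \<and> q \<subseteq> \<sigma>)"
    and S2: "\<forall>\<sigma>1\<in>\<Xi> \<union> \<Theta>. \<forall>\<sigma>2\<in>\<Xi> \<union> \<Theta>. \<sigma>1 \<noteq> \<sigma>2 \<longrightarrow> ptsof N (\<sigma>1 \<inter> \<sigma>2) \<subseteq> XY"
    by (elim conjE)
  have HXZ: "X \<subseteq> pts N" "Z \<subseteq> pts N" using HX1 HZ1 .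
  have HT: "\<forall>\<theta>\<in>\<Theta>. \<exists>V. cone N (nat r') v' \<theta> (XY \<inter> ptsof N \<theta>) V \<and>
              generator N (XY \<inter> ptsof N \<theta>) (Y \<inter> \<theta>) \<and>
              X \<inter> ptsof N \<theta> = (XY \<inter> ptsof N \<theta>) - ptsof N (Y \<inter> \<theta>)"
  proof
    fix \<theta> assume "\<theta> \<in> \<Theta>"
    then obtain V U where "cone N (nat r') v' \<theta> (XY \<inter> ptsof N \<theta>) V"
      "generator N (XY \<inter> ptsof N \<theta>) (Y \<inter> \<theta>)"
      "X \<inter> ptsof N \<theta> = (XY \<inter> ptsof N \<theta>) - ptsof N (Y \<inter> \<theta>)"
      using HT0 by meson
    then show "\<exists>V. cone N (nat r') v' \<theta> (XY \<inter> ptsof N \<theta>) V \<and>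
              generator N (XY \<inter> ptsof N \<theta>) (Y \<inter> \<theta>) \<and>
              X \<inter> ptsof N \<theta> = (XY \<inter> ptsof N \<theta>) - ptsof N (Y \<inter> \<theta>)" by blast
  qed
  have Ysub: "lsubspace Y" unfolding Y_def by simp
  have Xi_sub: "lsubspace \<xi>" "\<xi> \<subseteq> amb N" if "\<xi> \<in> \<Xi>" for \<xi>
    using cone_basic[of N "nat r" v \<xi>] HX that by blast+
  have Th_sub: "lsubspace \<theta>" "\<theta> \<subseteq> amb N" if "\<theta> \<in> \<Theta>" for \<theta>
    using cone_basic[of N "nat r'" v' \<theta>] HT that by blast+

  have A: "Y \<subseteq> \<xi>" if T0: "\<Theta> = {}" and xi: "\<xi> \<in> \<Xi>" for \<xi>
  proof -
    have "\<Union>Z \<subseteq> \<xi>"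
    proof
      fix z0 assume "z0 \<in> \<Union>Z"
      then obtain z where z: "z \<in> Z" "z0 \<in> z" by blast
      show "z0 \<in> \<xi>"
      proof (rule ccontr)
        assume z0n: "z0 \<notin> \<xi>"
        have z0Y: "z0 \<in> Y" unfolding Y_def using z by (intro V.span_base) blast
        have z0A: "z0 \<in> amb N" using z HXZ pts_amb by blast
        have zn: "\<not> z \<subseteq> \<xi>" using z z0n by blast
        have cx: "cone N (nat r) v \<xi> (XY \<inter> ptsof N \<xi>) (Y \<inter> \<xi>)"
          and ex: "X \<inter> ptsof N \<xi> = (XY \<inter> ptsof N \<xi>) - ptsof N (Y \<inter> \<xi>)" using HX xi by auto
        obtain f0 f1 where f: "f0 \<in> \<xi>" "f1 \<in> \<xi>" "f0 \<in> amb N" "f1 \<in> amb N" "f0 \<noteq> f1"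
          "f0 \<notin> Y \<inter> \<xi>" "f1 \<notin> Y \<inter> \<xi>" "pt f0 \<in> XY \<inter> ptsof N \<xi>" "pt f1 \<in> XY \<inter> ptsof N \<xi>"
          "pt (f0 - f1) \<notin> XY \<inter> ptsof N \<xi>"
          using cone_pts[OF cx] by blast
        have inX: "pt g \<in> X" "g \<notin> Y" if "g \<in> \<xi>" "g \<notin> Y \<inter> \<xi>" "pt g \<in> XY \<inter> ptsof N \<xi>" for g
        proof -
          have "pt g \<notin> ptsof N (Y \<inter> \<xi>)" using that pt_mem[of g] by (auto simp: ptsof_iff)
          then show "pt g \<in> X" using that ex by blast
          show "g \<notin> Y" using that by blast
        qed
        have ext: "pt (g + z0) \<in> X" if g: "g \<in> \<xi>" "g \<notin> Y" "pt g \<in> X" "g \<in> amb N" for g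
        proof -
          have "pt g \<noteq> z" using zn g(1) Xi_sub(1)[OF xi] pt_sub by metis
          then obtain \<sigma> where \<sigma>: "\<sigma> \<in> \<Xi>" "pt g \<subseteq> \<sigma>" "z \<subseteq> \<sigma>" using S1 g(3) z(1) T0 by blast
          have cs: "cone N (nat r) v \<sigma> (XY \<inter> ptsof N \<sigma>) (Y \<inter> \<sigma>)" using HX \<sigma>(1) by auto
          have "pt g \<in> XY \<inter> ptsof N \<sigma>" using g(3) HXZ \<sigma>(2) by (auto simp: XY_def ptsof_iff)
          moreover have "z0 \<in> Y \<inter> \<sigma>" using z0Y z \<sigma>(3) by blast
          moreover have gz: "g + z0 \<noteq> 0"
          proof
            assume "g + z0 = 0"
            then have "g = - z0" by (simp add: eq_neg_iff_add_eq_0)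
            then show False using g(2) z0Y V.subspace_neg[OF Ysub] by (metis minus_minus)
          qed
          ultimately have "pt (g + z0) \<in> XY \<inter> ptsof N \<sigma>" using cone_ext[OF cs _ _ _ g(4)] by blast
          moreover have "pt (g + z0) \<notin> ptsof N Y"
          proof
            assume "pt (g + z0) \<in> ptsof N Y"
            then have "g + z0 \<in> Y" using pt_mem by (auto simp: ptsof_iff)
            then have "(g + z0) - z0 \<in> Y" using z0Y V.subspace_diff[OF Ysub] by blast
            then show False using g(2) by simp
          qed
          ultimately show ?thesis by (auto simp: XY_def)
        qed
        have y: "pt (f0 + z0) \<in> X" using ext[of f0] inX[of f0] f by blast
        have y': "pt (f1 + z0) \<in> X" using ext[of f1] inX[of f1] f by blast
        have yy: "pt (f0 + z0) \<noteq> pt (f1 + z0)"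
        proof
          assume "pt (f0 + z0) = pt (f1 + z0)"
          then have "f1 + z0 \<in> pt (f0 + z0)" using pt_mem by metis
          then obtain c where c: "f1 + z0 = sc c (f0 + z0)" by (auto simp: pt_def)
          show False
          proof (cases "c = 1")
            case True then show False using c f(5) by simp
          next
            case False
            have "sc (1 - c) z0 = sc c f0 - f1"
              using c by (simp add: V.scale_left_diff_distrib V.scale_right_distrib algebra_simps)
            moreover have "sc c f0 - f1 \<in> \<xi>"
              using f Xi_sub(1)[OF xi] V.subspace_diff V.subspace_scale by blast
            ultimately have "sc (inverse (1 - c)) (sc (1 - c) z0) \<in> \<xi>"
              using Xi_sub(1)[OF xi] V.subspace_scale by metis
            then show False using False z0n by simp
          qed
        qed
        obtain \<tau> where \<tau>: "\<tau> \<in> \<Xi>" "pt (f0 + z0) \<subseteq> \<tau>" "pt (f1 + z0) \<subseteq> \<tau>"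
          using S1 y y' yy T0 by blast
        have ts: "lsubspace \<tau>" using Xi_sub \<tau>(1) by blast
        have a0: "f0 + z0 \<in> \<tau>" "f1 + z0 \<in> \<tau>" using \<tau> pt_mem by blast+
        have "\<tau> \<noteq> \<xi>"
        proof
          assume "\<tau> = \<xi>"
          then have "(f0 + z0) - f0 \<in> \<xi>" using a0 f(1) V.subspace_diff Xi_sub(1)[OF xi] by blast
          then show False using z0n by simp
        qed
        have "(f0 + z0) - (f1 + z0) \<in> \<tau>" using a0 V.subspace_diff[OF ts] by blast
        then have d\<tau>: "f0 - f1 \<in> \<tau>" by simp
        have d\<xi>: "f0 - f1 \<in> \<xi>" using f V.subspace_diff[OF Xi_sub(1)[OF xi]] by blast
        have dA: "f0 - f1 \<in> amb N" using f V.subspace_diff[OF amb_sub] by blast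
        have dP: "pt (f0 - f1) \<in> pts N" using pt_in_pts[OF dA] f(5) by simp
        have "pt (f0 - f1) \<subseteq> \<tau> \<inter> \<xi>"
          using pt_sub[OF V.subspace_inter[OF ts Xi_sub(1)[OF xi]]] d\<tau> d\<xi> by blast
        then have "pt (f0 - f1) \<in> ptsof N (\<tau> \<inter> \<xi>)" using dP by (simp add: ptsof_iff)
        then have "pt (f0 - f1) \<in> XY" using S2 \<tau>(1) xi \<open>\<tau> \<noteq> \<xi>\<close> by blast
        moreover have "pt (f0 - f1) \<in> ptsof N \<xi>"
          using dP d\<xi> pt_sub[OF Xi_sub(1)[OF xi]] by (auto simp: ptsof_iff)
        ultimately show False using f(10) by blast
      qed
    qed
    then show ?thesis unfolding Y_def using V.span_minimal Xi_sub(1)[OF xi] by blast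
  qed

  have B: "\<Theta> = {}" if all: "\<forall>\<xi>\<in>\<Xi>. Y \<inter> \<xi> = Y"
  proof (rule ccontr)
    assume "\<Theta> \<noteq> {}"
    then obtain \<theta> where th: "\<theta> \<in> \<Theta>" by blast
    have L: "p \<subseteq> Y" if "\<xi>' \<in> \<Xi>" "\<theta>' \<in> \<Theta>" "\<xi>' \<noteq> \<theta>'" "p \<in> pts N" "p \<subseteq> \<xi>'" "p \<subseteq> \<theta>'"
      for \<xi>' \<theta>' p
    proof -
      have g: "generator N (XY \<inter> ptsof N \<theta>') (Y \<inter> \<theta>')" using HT that(2) by blast
      have "Y \<subseteq> \<xi>'" using all that(1) by blast
      have "lsubspace (\<xi>' \<inter> \<theta>')"
        using V.subspace_inter Xi_sub(1)[OF that(1)] Th_sub(1)[OF that(2)] by blast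
      moreover have "Y \<inter> \<theta>' \<subseteq> \<xi>' \<inter> \<theta>'" using \<open>Y \<subseteq> \<xi>'\<close> by blast
      moreover have "\<xi>' \<inter> \<theta>' \<subseteq> amb N" using Th_sub(2)[OF that(2)] by blast
      moreover have "ptsof N (\<xi>' \<inter> \<theta>') \<subseteq> XY \<inter> ptsof N \<theta>'"
        using S2 that(1-3) by (auto simp: ptsof_iff)
      ultimately have "\<xi>' \<inter> \<theta>' = Y \<inter> \<theta>'" using g unfolding generator_def by blast
      then show ?thesis using that(5,6) by blast
    qed
    obtain V where cT: "cone N (nat r') v' \<theta> (XY \<inter> ptsof N \<theta>) V"
      and gT: "generator N (XY \<inter> ptsof N \<theta>) (Y \<inter> \<theta>)"
      and eT: "X \<inter> ptsof N \<theta> = (XY \<inter> ptsof N \<theta>) - ptsof N (Y \<inter> \<theta>)"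
      using HT th by blast
    obtain f0 f1 where f: "f0 \<in> \<theta>" "f1 \<in> \<theta>" "f0 \<in> amb N" "f1 \<in> amb N" "f0 \<noteq> f1"
      "pt f0 \<in> XY \<inter> ptsof N \<theta>" "pt f1 \<in> XY \<inter> ptsof N \<theta>" "pt (f0 - f1) \<notin> XY \<inter> ptsof N \<theta>"
      using cone_pts[OF cT] by blast
    have "\<exists>g. g \<in> \<theta> \<and> g \<notin> Y \<and> pt g \<in> XY \<inter> ptsof N \<theta>"
    proof (rule ccontr)
      assume "\<not> ?thesis"
      then have "f0 \<in> Y" "f1 \<in> Y" using f by blast+
      then have "f0 - f1 \<in> Y \<inter> \<theta>"
        using V.subspace_diff[OF Ysub] V.subspace_diff[OF Th_sub(1)[OF th]] f by blast
      moreover have "f0 - f1 \<in> amb N" using f V.subspace_diff[OF amb_sub] by blast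
      ultimately have "pt (f0 - f1) \<in> ptsof N (Y \<inter> \<theta>)"
        using pt_in_pts[of "f0 - f1" N] f(5) pt_sub[OF V.subspace_inter[OF Ysub Th_sub(1)[OF th]]]
        by (auto simp: ptsof_iff)
      then show False using gT f(8) unfolding generator_def by blast
    qed
    then obtain g where g: "g \<in> \<theta>" "g \<notin> Y" "pt g \<in> XY \<inter> ptsof N \<theta>" by blast
    have "pt g \<notin> ptsof N (Y \<inter> \<theta>)" using g(2) pt_mem[of g] by (auto simp: ptsof_iff)
    then have "pt g \<in> X \<inter> ptsof N \<theta>" using eT g(3) by blast
    then have xX: "pt g \<in> X" by blast
    have xT: "pt g \<subseteq> \<theta>" using g by (auto simp: ptsof_iff)
    have xY: "\<not> pt g \<subseteq> Y" using g pt_mem[of g] by blast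
    obtain \<xi> where xi: "\<xi> \<in> \<Xi>" "\<xi> \<noteq> \<theta>" using two by blast
    have cx: "cone N (nat r) v \<xi> (XY \<inter> ptsof N \<xi>) (Y \<inter> \<xi>)"
      and ex: "X \<inter> ptsof N \<xi> = (XY \<inter> ptsof N \<xi>) - ptsof N (Y \<inter> \<xi>)" using HX xi by auto
    obtain h where h: "h \<in> \<xi>" "h \<notin> Y \<inter> \<xi>" "pt h \<in> XY \<inter> ptsof N \<xi>"
      using cone_pts[OF cx] by blast
    have "pt h \<notin> ptsof N (Y \<inter> \<xi>)" using h(2) pt_mem[of h] by (auto simp: ptsof_iff)
    then have "pt h \<in> X \<inter> ptsof N \<xi>" using ex h(3) by blast
    then have yX: "pt h \<in> X" by blast
    have yT: "pt h \<subseteq> \<xi>" using h by (auto simp: ptsof_iff)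
    have yY: "\<not> pt h \<subseteq> Y" using h pt_mem[of h] by blast
    have xP: "pt g \<in> pts N" and yP: "pt h \<in> pts N" using xX yX HXZ by auto
    have a: "\<not> pt g \<subseteq> \<xi>'" if "\<xi>' \<in> \<Xi>" "\<xi>' \<noteq> \<theta>" for \<xi>'
      using L[OF that(1) th that(2) xP _ xT] xY by blast
    have b: "\<not> pt h \<subseteq> \<theta>'" if "\<theta>' \<in> \<Theta>" "\<theta>' \<noteq> \<xi>" for \<theta>'
      using L[OF xi(1) that(1) _ yP yT] that(2) yY by metis
    have "pt g \<noteq> pt h" using a[OF xi] yT by metis
    then obtain \<sigma> where \<sigma>: "\<sigma> \<in> \<Xi> \<union> \<Theta>" "pt g \<subseteq> \<sigma>" "pt h \<subseteq> \<sigma>" using S1 xX yX by blast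
    show False
    proof (cases "\<sigma> \<in> \<Xi>")
      case True
      then show False
      proof (cases "\<sigma> = \<theta>")
        case True then show False using b[OF th] xi(2) \<sigma>(3) by metis
      next
        case False then show False using a \<open>\<sigma> \<in> \<Xi>\<close> \<sigma>(2) by blast
      qed
    next
      case False
      then have "\<sigma> \<in> \<Theta>" using \<sigma>(1) by blast
      then show False
      proof (cases "\<sigma> = \<xi>")
        case True then show False using a[OF xi] \<sigma>(2) by blast
      next
        case False then show False using b \<open>\<sigma> \<in> \<Theta>\<close> \<sigma>(3) by blast
      qed
    qed
  qed

  have C: "Y \<inter> \<xi> = Y" if x0: "\<xi>0 \<in> \<Xi>" "Y \<inter> \<xi>0 = Y" and xi: "\<xi> \<in> \<Xi>" for \<xi>0 \<xi>
  proof -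
    obtain B0 where B0: "finite B0" "lindep B0" "card B0 = nat (v+1)" "Y \<inter> \<xi>0 = lspan B0"
      using cone_dim[of N "nat r" v \<xi>0] HX x0(1) by blast
    obtain B where B: "finite B" "lindep B" "card B = nat (v+1)" "Y \<inter> \<xi> = lspan B"
      using cone_dim[of N "nat r" v \<xi>] HX xi by blast
    have "B0 \<subseteq> lspan B"
    proof
      fix b assume b: "b \<in> B0"
      show "b \<in> lspan B"
      proof (rule ccontr)
        assume nb: "b \<notin> lspan B"
        have "lindep (insert b B)" using V.independent_insertI[OF nb B(2)] .
        moreover have "insert b B \<subseteq> lspan B0"
        proof -
          have "b \<in> lspan B0" using b V.span_base by blast
          moreover have "B \<subseteq> lspan B0"
            using V.span_superset[of B] B(4) x0(2) B0(4) by blast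
          ultimately show ?thesis by blast
        qed
        ultimately have "card (insert b B) \<le> card B0"
          using V.independent_span_bound[OF B0(1)] by blast
        moreover have "b \<notin> B" using nb V.span_base by blast
        ultimately show False using B(1,3) B0(3) by simp
      qed
    qed
    then have "lspan B0 \<subseteq> lspan B" using V.span_minimal by blast
    then show ?thesis using B(4) B0(4) x0(2) by blast
  qed

  have ne: "\<Xi> \<noteq> {}" using two by blast
  show ?thesis
  proof (intro conjI iffI)
    assume "\<Theta> = {}" then show "\<forall>\<xi>\<in>\<Xi>. Y \<inter> \<xi> = Y" using A by blast
  next
    assume "\<forall>\<xi>\<in>\<Xi>. Y \<inter> \<xi> = Y" then show "\<Theta> = {}" using B by blast
  next
    assume "\<forall>\<xi>\<in>\<Xi>. Y \<inter> \<xi> = Y" then show "\<exists>\<xi>\<in>\<Xi>. Y \<inter> \<xi> = Y" using ne by blast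
  next
    assume "\<exists>\<xi>\<in>\<Xi>. Y \<inter> \<xi> = Y" then show "\<forall>\<xi>\<in>\<Xi>. Y \<inter> \<xi> = Y" using C by blast
  qed
qed

end
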